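(* Let $\zeta$ be the Riemann zeta function. Then $$\lim_{x\to\infty}2^x\bigl[\ln\zeta(\ln\zeta(x)+1)-\ln\zeta(\zeta(x))\bigr]=\frac12 .$$ *)

theory Defs
  imports "HOL-Analysis.Analysis"
begin

text \<open>Riemann zeta function on the real half-line s > 1, given by its Dirichlet series
  (for s \<le> 1 the value is unspecified junk; only s > 1 is used below).\<close>
definition rzeta :: "real \<Rightarrow> real" where
  "rzeta s = (\<Sum>n. 1 / (real (Suc n)) powr s)"

end

theory Submission
  imports Defs "HOL-Real_Asymp.Real_Asymp"
begin


lemma ln_diff_bounds:
  fixes k :: real assumes "k \<ge> 1"
  shows "1/(k+1) \<le> ln (k+1) - ln k" "ln (k+1) - ln k \<le> 1/k"
proof -
  have "ln ((k+1)/k) \<le> (k+1)/k - 1" using assms by (intro ln_le_minus_one) auto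
  moreover have "ln ((k+1)/k) = ln (k+1) - ln k" using assms by (simp add: ln_div)
  moreover have "(k+1)/k - 1 = 1/k" using assms by (simp add: field_simps)
  ultimately show "ln (k+1) - ln k \<le> 1/k" by simp
  have "ln (k/(k+1)) \<le> k/(k+1) - 1" using assms by (intro ln_le_minus_one) auto
  moreover have "ln (k/(k+1)) = ln k - ln (k+1)" using assms by (simp add: ln_div)
  moreover have "k/(k+1) - 1 = -1/(k+1)" using assms by (simp add: field_simps)
  ultimately show "1/(k+1) \<le> ln (k+1) - ln k" by simp
qed

lemma quot_bounds:
  fixes k c :: real assumes k: "k \<ge> 1" and c: "c > 0"
  shows "(k+1) powr (-1-c) \<le> (k powr (-c) - (k+1) powr (-c))/c"
        "(k powr (-c) - (k+1) powr (-c))/c \<le> k powr (-1-c)"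
proof -
  define u where "u = ln k"
  define v where "v = ln (k+1)"
  have d1: "1/(k+1) \<le> v - u" and d2: "v - u \<le> 1/k" using ln_diff_bounds[OF k] by (auto simp: u_def v_def)
  have ek: "k powr (-c) = exp (-c * u)" using k by (simp add: powr_def u_def)
  have ek1: "(k+1) powr (-c) = exp (-c * v)" using k by (simp add: powr_def v_def)
  have fk: "k powr (-1-c) = exp (-c * u) / k"
    using k by (simp add: powr_def u_def algebra_simps exp_diff exp_minus field_simps)
  have fk1: "(k+1) powr (-1-c) = exp (-c * v) / (k+1)"
    using k by (simp add: powr_def v_def algebra_simps exp_diff exp_minus field_simps)
  have "exp (-c * u) - exp (-c * v) = exp (-c * u) * (1 - exp (- (c * (v - u))))"
    by (simp add: algebra_simps flip: exp_add)
  also have "\<dots> \<le> exp (-c * u) * (c*(v-u))"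
    using exp_ge_add_one_self[of "- (c * (v - u))"] by (intro mult_left_mono) auto
  also have "\<dots> \<le> exp (-c * u) * (c*(1/k))"
    using d2 c by (intro mult_left_mono) auto
  finally have "exp (-c * u) - exp (-c * v) \<le> c * (exp (-c * u)/k)" by (simp add: mult.commute)
  then show "(k powr (-c) - (k+1) powr (-c))/c \<le> k powr (-1-c)"
    using c by (simp add: ek ek1 fk divide_le_eq mult.commute)
  have "exp (-c * v) * (c*(1/(k+1))) \<le> exp (-c * v) * (c*(v-u))"
    using d1 c by (intro mult_left_mono) auto
  also have "\<dots> \<le> exp (-c * v) * (exp (c*(v-u)) - 1)"
    by (intro mult_left_mono) (insert exp_ge_add_one_self[of "c * (v - u)"], linarith, simp)
  also have "\<dots> = exp (-c * u) - exp (-c * v)"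
    by (simp add: algebra_simps flip: exp_add)
  finally have "c * (exp (-c * v)/(k+1)) \<le> exp (-c * u) - exp (-c * v)" by (simp add: mult.commute)
  then show "(k+1) powr (-1-c) \<le> (k powr (-c) - (k+1) powr (-c))/c"
    using c by (simp add: ek ek1 fk1 le_divide_eq mult.commute)
qed


lemma summ_powr: "s > 1 \<Longrightarrow> summable (\<lambda>n. 1 / real (Suc n) powr s)"
proof -
  assume "s > 1"
  then have "summable (\<lambda>n. real n powr (-s))" by (subst summable_real_powr_iff) auto
  then have "summable (\<lambda>n. real (Suc n) powr (-s))" by (subst summable_Suc_iff)
  then show ?thesis by (simp add: powr_minus_divide)
qed

definition Dt :: "nat \<Rightarrow> real \<Rightarrow> real" where
  "Dt n c = real (Suc n) powr (-1-c) - (real (Suc n) powr (-c) - (real (Suc n) + 1) powr (-c))/c"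

definition Fz :: "real \<Rightarrow> real" where "Fz c = (\<Sum>n. Dt n c)"

lemma Dt_bounds:
  assumes c: "0 < c" "c \<le> 1"
  shows "0 \<le> Dt n c" "Dt n c \<le> 2 * (1 / real (Suc n) powr 2)"
proof -
  define k where "k = real (Suc n)"
  have k: "k \<ge> 1" by (simp add: k_def)
  note q = quot_bounds[OF k c(1)]
  show "0 \<le> Dt n c" using q(2) by (simp add: Dt_def k_def)
  have "Dt n c \<le> k powr (-1-c) - (k+1) powr (-1-c)" using q(1) by (simp add: Dt_def k_def)
  also have "\<dots> = (c+1) * ((k powr (-1-c) - (k+1) powr (-1-c))/(c+1))"
    using c by (simp add: divide_simps)
  also have "\<dots> \<le> (c+1) * k powr (-c-2)"
  proof (intro mult_left_mono)
    show "(k powr (-1-c) - (k+1) powr (-1-c))/(c+1) \<le> k powr (-c-2)"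
      using quot_bounds(2)[OF k, of "c+1"] c by (simp add: algebra_simps)
  qed (use c in auto)
  also have "\<dots> \<le> 2 * k powr (-2)"
    using c k by (intro mult_mono powr_mono) auto
  also have "\<dots> = 2 * (1 / k powr 2)" by (simp add: powr_minus_divide)
  finally show "Dt n c \<le> 2 * (1 / real (Suc n) powr 2)" by (simp add: k_def)
qed

lemma Dt_norm: "0 < c \<Longrightarrow> c \<le> 1 \<Longrightarrow> norm (Dt n c) \<le> 2 * (1 / real (Suc n) powr 2)"
proof -
  assume c: "0 < c" "c \<le> 1"
  have "norm (Dt n c) = Dt n c" using Dt_bounds(1)[OF c] by simp
  then show ?thesis using Dt_bounds(2)[OF c, of n] by linarith
qed

lemma summ_M: "summable (\<lambda>n. 2 * (1 / real (Suc n) powr 2))"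
  using summ_powr[of 2] by (intro summable_mult) auto

lemma zeta_split:
  assumes c: "0 < c" shows "rzeta (1+c) = 1/c + Fz c"
proof -
  define Q where "Q = (\<lambda>n. (real (Suc n) powr (-c) - (real (Suc n) + 1) powr (-c))/c)"
  have lim: "(\<lambda>n. real (Suc n) powr (-c) / c) \<longlonglongrightarrow> 0"
  proof -
    have "(\<lambda>n. real n powr (-c)) \<longlonglongrightarrow> 0" using c by (intro tendsto_neg_powr filterlim_real_sequentially) auto
    then have "(\<lambda>n. real (Suc n) powr (-c)) \<longlonglongrightarrow> 0" by (rule LIMSEQ_Suc)
    then show ?thesis using tendsto_divide_zero by blast
  qed
  have "(\<lambda>n. real (Suc n) powr (-c) / c - real (Suc (Suc n)) powr (-c) / c) sums (real (Suc 0) powr (-c) / c - 0)"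
    by (rule telescope_sums'[OF lim])
  then have Qs: "Q sums (1/c)" by (simp add: Q_def diff_divide_distrib add.commute)
  have ps: "summable (\<lambda>n. 1 / real (Suc n) powr (1+c))" using summ_powr c by simp
  have eq: "Dt n c = 1 / real (Suc n) powr (1+c) - Q n" for n
  proof -
    have "real (Suc n) powr (-1-c) = real (Suc n) powr (-(1+c))" by (simp add: algebra_simps)
    also have "\<dots> = 1 / real (Suc n) powr (1+c)" by (rule powr_minus_divide)
    finally show ?thesis by (simp add: Dt_def Q_def)
  qed
  have "(\<lambda>n. Dt n c) sums (rzeta (1+c) - 1/c)"
    unfolding eq rzeta_def by (intro sums_diff summable_sums ps Qs)
  then show ?thesis unfolding Fz_def by (simp add: sums_iff)
qed


lemma Q_lim:
  fixes k :: real assumes k: "k > 0"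
  shows "((\<lambda>c. (k powr (-c) - (k+1) powr (-c))/c) \<longlongrightarrow> ln (k+1) - ln k) (at_right 0)"
proof -
  define h where "h = (\<lambda>c::real. exp (-c * ln k) - exp (-c * ln (k+1)))"
  have "(h has_real_derivative (ln (k+1) - ln k)) (at 0 within {0<..})"
    unfolding h_def by (auto intro!: derivative_eq_intros)
  then have "((\<lambda>c. (h c - h 0) / (c - 0)) \<longlongrightarrow> ln (k+1) - ln k) (at_right 0)"
    by (simp add: has_field_derivative_iff)
  moreover have "(\<lambda>c. (h c - h 0) / (c - 0)) = (\<lambda>c. (k powr (-c) - (k+1) powr (-c))/c)"
    using k by (auto simp: h_def powr_def)
  ultimately show ?thesis by simp
qed

definition Dl :: "nat \<Rightarrow> real" where
  "Dl n = 1 / real (Suc n) - (ln (real (Suc n) + 1) - ln (real (Suc n)))"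

lemma Dt_lim: "((\<lambda>c. Dt n c) \<longlongrightarrow> Dl n) (at_right 0)"
proof -
  have "((\<lambda>c. real (Suc n) powr (-1-c)) \<longlongrightarrow> real (Suc n) powr (-1-0)) (at_right 0)"
    by (intro tendsto_powr tendsto_intros) auto
  moreover have "real (Suc n) powr (-1-0) = 1 / real (Suc n)"
    by (simp add: powr_minus_divide)
  ultimately show ?thesis
    unfolding Dt_def Dl_def by (intro tendsto_diff Q_lim) auto
qed

lemma Fz_lim: "\<exists>L. (Fz \<longlongrightarrow> L) (at_right 0)"
proof -
  define M where "M = (\<lambda>n. 2 * (1 / real (Suc n) powr 2))"
  have ev: "eventually (\<lambda>c. c \<in> {0<..1::real}) (at_right 0)"
    using eventually_at_right_real[of 0 1] by (rule eventually_mono) auto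
  have Dlb: "0 \<le> Dl n \<and> Dl n \<le> M n" for n
  proof
    show "0 \<le> Dl n"
      by (rule tendsto_lowerbound[OF Dt_lim]) (use ev in \<open>auto elim!: eventually_mono intro: Dt_bounds\<close>)
    show "Dl n \<le> M n"
    proof (rule tendsto_upperbound[OF Dt_lim])
      show "\<forall>\<^sub>F i in at_right 0. Dt n i \<le> M n"
        using ev by (rule eventually_mono) (unfold M_def, rule Dt_bounds(2), auto)
    qed auto
  qed
  have sDl: "summable Dl"
    by (rule summable_comparison_test[OF _ summ_M[folded M_def]]) (use Dlb in auto)
  have uc: "uniform_limit {0<..1} (\<lambda>N c. \<Sum>i<N. Dt i c) (\<lambda>c. \<Sum>i. Dt i c) sequentially"
    by (rule Weierstrass_m_test[OF _ summ_M]) (rule Dt_norm, auto)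
  have "(Fz \<longlongrightarrow> suminf Dl) (at_right 0)"
    unfolding Fz_def
  proof (rule swap_uniform_limit'[OF _ _ uc ev])
    show "\<forall>\<^sub>F N in sequentially. ((\<lambda>c. \<Sum>i<N. Dt i c) \<longlongrightarrow> (\<Sum>i<N. Dl i)) (at_right 0)"
      by (intro always_eventually allI tendsto_sum Dt_lim)
    show "(\<lambda>N. \<Sum>i<N. Dl i) \<longlonglongrightarrow> suminf Dl"
      using sDl by (simp add: summable_LIMSEQ)
  qed auto
  then show ?thesis by blast
qed


lemma Fz_bounds: "0 < c \<Longrightarrow> c \<le> 1 \<Longrightarrow> 0 \<le> Fz c \<and> Fz c \<le> (\<Sum>n. 2 * (1 / real (Suc n) powr 2))"
proof -
  assume c: "0 < c" "c \<le> 1"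
  have s: "summable (\<lambda>n. Dt n c)"
    by (rule summable_comparison_test[OF _ summ_M]) (use Dt_norm[OF c] in blast)
  have "0 \<le> Fz c" unfolding Fz_def by (rule suminf_nonneg[OF s]) (rule Dt_bounds(1)[OF c])
  moreover have "Fz c \<le> (\<Sum>n. 2 * (1 / real (Suc n) powr 2))"
    unfolding Fz_def by (rule suminf_le[OF _ s summ_M]) (rule Dt_bounds(2)[OF c])
  ultimately show ?thesis by blast
qed


lemma b_asym: "((\<lambda>x. 2 powr x * (rzeta x - 1)) \<longlongrightarrow> 1) at_top"
proof -
  define M where "M = (\<lambda>n. 4 * (1 / real (Suc n) powr 2))"
  define T where "T = (\<lambda>x. \<Sum>n. (2 / real (n+3)) powr x)"
  have key: "2 powr x * (rzeta x - 1) = 1 + T x \<and> 0 \<le> T x \<and> T x \<le> (2/3) powr (x-2) * suminf M"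
    if x: "x \<ge> 2" for x :: real
  proof -
    have s1: "summable (\<lambda>n. 1 / real (Suc n) powr x)" using summ_powr x by simp
    have e1: "rzeta x - 1 = (\<Sum>n. 1 / real (Suc (Suc n)) powr x)"
      unfolding rzeta_def using suminf_split_head[OF s1] by simp
    have s2: "summable (\<lambda>n. 1 / real (Suc (Suc n)) powr x)"
      using s1 by (subst summable_Suc_iff)
    have e2: "2 powr x * (rzeta x - 1) = (\<Sum>n. (2 / real (Suc (Suc n))) powr x)"
      unfolding e1 suminf_mult[OF s2, symmetric] by (simp add: powr_divide)
    have s3: "summable (\<lambda>n. (2 / real (Suc (Suc n))) powr x)"
      using summable_mult[OF s2, of "2 powr x"] by (simp add: powr_divide)
    have e3: "(\<Sum>n. (2 / real (Suc (Suc n))) powr x) = 1 + T x"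
      unfolding T_def using suminf_split_head[OF s3]
      by (simp add: numeral_3_eq_3 add.commute)
    have bnd: "(2 / real (n+3)) powr x \<le> (2/3) powr (x-2) * M n" for n
    proof -
      have "(2 / real (n+3)) powr x = (2 / real (n+3)) powr (x-2) * (2 / real (n+3)) powr 2"
        using powr_add[of "2 / real (n+3)" "x-2" 2] by simp
      also have "\<dots> \<le> (2/3) powr (x-2) * M n"
      proof (intro mult_mono)
        show "(2 / real (n+3)) powr (x-2) \<le> (2/3) powr (x-2)"
          using x by (intro powr_mono2) (auto simp: divide_simps)
        have "(2 / real (n+3)) powr 2 = 4 / (real n + 3)^2" by (simp add: power2_eq_square)
        also have "\<dots> \<le> 4 / (real n + 1)^2" by (simp add: divide_simps power2_eq_square) (simp add: algebra_simps)
        also have "\<dots> = M n" by (simp add: M_def add.commute)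
        finally show "(2 / real (n+3)) powr 2 \<le> M n" .
      qed (auto simp: M_def)
      finally show ?thesis .
    qed
    have sM: "summable M" using summable_mult[OF summ_powr[of 2], of 4] by (simp add: M_def)
    have sT: "summable (\<lambda>n. (2 / real (n+3)) powr x)"
      by (rule summable_comparison_test[OF _ summable_mult[OF sM, of "(2/3) powr (x-2)"]]) (use bnd in auto)
    have "T x \<le> (\<Sum>n. (2/3) powr (x-2) * M n)"
      unfolding T_def by (intro suminf_le sT summable_mult sM bnd)
    also have "\<dots> = (2/3) powr (x-2) * suminf M" by (rule suminf_mult[OF sM])
    finally show ?thesis using e2 e3 sT by (auto simp: T_def intro: suminf_nonneg)
  qed
  have "(T \<longlongrightarrow> 0) at_top"
  proof (rule Lim_null_comparison)
    show "\<forall>\<^sub>F x in at_top. norm (T x) \<le> (2/3) powr (x-2) * suminf M"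
      using eventually_ge_at_top[of "2::real"]
    proof (rule eventually_mono)
      fix x :: real assume "2 \<le> x"
      from key[OF this] show "norm (T x) \<le> (2/3) powr (x-2) * suminf M" by simp
    qed
    have "((\<lambda>x::real. (2/3) powr (x-2)) \<longlongrightarrow> 0) at_top" by real_asymp
    then show "((\<lambda>x. (2/3) powr (x-2) * suminf M) \<longlongrightarrow> 0) at_top"
      by (rule tendsto_mult_left_zero)
  qed
  then have "((\<lambda>x. 1 + T x) \<longlongrightarrow> 1 + 0) at_top" by (intro tendsto_add tendsto_const)
  then have "((\<lambda>x. 1 + T x) \<longlongrightarrow> 1) at_top" by simp
  then show ?thesis
  proof (rule Lim_transform_eventually)
    show "\<forall>\<^sub>F x in at_top. 1 + T x = 2 powr x * (rzeta x - 1)"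
      using eventually_ge_at_top[of "2::real"]
    proof (rule eventually_mono)
      fix x :: real assume "2 \<le> x"
      from key[OF this] show "1 + T x = 2 powr x * (rzeta x - 1)" by simp
    qed
  qed
qed



lemma ln_lip: "1 \<le> u \<Longrightarrow> 1 \<le> (v::real) \<Longrightarrow> \<bar>ln u - ln v\<bar> \<le> \<bar>u - v\<bar>"
proof -
  have aux: "ln u - ln v \<le> u - v" if "1 \<le> v" "v \<le> u" for u v :: real
  proof -
    have "ln u - ln v = ln (u/v)" using that by (simp add: ln_div)
    also have "\<dots> \<le> u/v - 1" using that by (intro ln_le_minus_one) auto
    also have "\<dots> = (u - v)/v" using that by (simp add: field_simps)
    also have "\<dots> \<le> u - v" using that by (simp add: divide_le_eq) (smt (verit) mult_le_cancel_left1)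
    finally show ?thesis .
  qed
  assume "1 \<le> u" "1 \<le> v"
  then show ?thesis using aux[of v u] aux[of u v] by (cases "u \<le> v") auto
qed


lemma T2_bound:
  fixes a b Fa Fb B p :: real
  assumes "0 < a" "a \<le> b" "0 \<le> Fa" "Fa \<le> B" "0 \<le> Fb" "0 < p"
  shows "\<bar>p * (ln (1 + a*Fa) - ln (1 + b*Fb))\<bar> \<le> p*(b-a)*B + p*b*\<bar>Fa - Fb\<bar>"
proof -
  have "\<bar>ln (1 + a*Fa) - ln (1 + b*Fb)\<bar> \<le> \<bar>a*Fa - b*Fb\<bar>"
    using ln_lip[of "1 + a*Fa" "1 + b*Fb"] assms by auto
  also have "a*Fa - b*Fb = (a-b)*Fa + b*(Fa - Fb)" by (simp add: algebra_simps)
  also have "\<bar>\<dots>\<bar> \<le> (b-a)*B + b*\<bar>Fa - Fb\<bar>"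
  proof -
    have "\<bar>(a-b)*Fa\<bar> \<le> (b-a)*B" using assms by (simp add: abs_mult mult_mono)
    moreover have "\<bar>b*(Fa - Fb)\<bar> = b*\<bar>Fa - Fb\<bar>" using assms by (simp add: abs_mult)
    ultimately show ?thesis by linarith
  qed
  finally have "\<bar>ln (1 + a*Fa) - ln (1 + b*Fb)\<bar> \<le> (b-a)*B + b*\<bar>Fa - Fb\<bar>" .
  then have "p * \<bar>ln (1 + a*Fa) - ln (1 + b*Fb)\<bar> \<le> p * ((b-a)*B + b*\<bar>Fa - Fb\<bar>)"
    using assms by (intro mult_left_mono) auto
  moreover have "\<bar>p * (ln (1 + a*Fa) - ln (1 + b*Fb))\<bar> = p * \<bar>ln (1 + a*Fa) - ln (1 + b*Fb)\<bar>"
    using assms by (simp add: abs_mult)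
  moreover have "p * ((b-a)*B + b*\<bar>Fa - Fb\<bar>) = p*(b-a)*B + p*b*\<bar>Fa - Fb\<bar>"
    by (simp add: algebra_simps)
  ultimately show ?thesis by linarith
qed

lemma ln_rzeta_split: "0 < c \<Longrightarrow> c \<le> 1 \<Longrightarrow> ln (rzeta (1+c)) = ln (1 + c * Fz c) - ln c"
proof -
  assume c: "0 < c" "c \<le> 1"
  have F0: "0 \<le> Fz c" using Fz_bounds[OF c] by simp
  have "rzeta (1+c) = (1 + c * Fz c) / c" using zeta_split[OF c(1)] c by (simp add: field_simps)
  moreover have "0 < 1 + c * Fz c" using F0 c by (smt (verit) mult_nonneg_nonneg)
  ultimately show ?thesis using c by (simp add: ln_div)
qed


lemma R1: "((\<lambda>t::real. ln (t / ln (1+t)) / t) \<longlongrightarrow> 1/2) (at_right 0)" by real_asymp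
lemma R2: "((\<lambda>t::real. (t - ln (1+t)) / t) \<longlongrightarrow> 0) (at_right 0)" by real_asymp

theorem mainTheorem8:
  shows "((\<lambda>x::real. 2 powr x * (ln (rzeta (ln (rzeta x) + 1)) - ln (rzeta (rzeta x))))
           \<longlongrightarrow> 1 / 2) at_top"
proof -
  define b where "b = (\<lambda>x. rzeta x - 1)"
  define a where "a = (\<lambda>x. ln (1 + b x))"
  define P where "P = (\<lambda>x. 2 powr x * b x)"
  define B where "B = (\<Sum>n. 2 * (1 / real (Suc n) powr 2))"
  have hP: "(P \<longlongrightarrow> 1) at_top" unfolding P_def b_def by (rule b_asym)
  have hb0: "(b \<longlongrightarrow> 0) at_top"
  proof -
    have "((\<lambda>x::real. 2 powr (-x)) \<longlongrightarrow> 0) at_top" by real_asymp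
    then have "((\<lambda>x. P x * 2 powr (-x)) \<longlongrightarrow> 1 * 0) at_top" by (intro tendsto_mult hP)
    moreover have "P x * 2 powr (-x) = b x" for x
    proof -
      have "P x * 2 powr (-x) = b x * (2 powr x * 2 powr (-x))" by (simp add: P_def algebra_simps)
      also have "2 powr x * 2 powr (-x) = (1::real)" by (simp add: powr_add[symmetric])
      finally show ?thesis by simp
    qed
    ultimately show ?thesis by simp
  qed
  have evP: "eventually (\<lambda>x. P x > 0) at_top" using hP by (rule order_tendstoD) simp
  have evb: "eventually (\<lambda>x. b x > 0) at_top"
    using evP by (rule eventually_mono) (simp add: P_def zero_less_mult_iff)
  have evb1: "eventually (\<lambda>x. b x < 1) at_top" using hb0 by (rule order_tendstoD) simp
  have hbF: "filterlim b (at_right 0) at_top"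
    unfolding filterlim_at using evb hb0 by (auto elim: eventually_mono)
  have ha0: "(a \<longlongrightarrow> 0) at_top"
  proof -
    have "((\<lambda>x. ln (1 + b x)) \<longlongrightarrow> ln (1 + 0)) at_top"
      by (intro tendsto_ln tendsto_add tendsto_const hb0) simp
    then show ?thesis by (simp add: a_def)
  qed
  have eva: "eventually (\<lambda>x. a x > 0) at_top"
    using evb by (rule eventually_mono) (simp add: a_def)
  have haF: "filterlim a (at_right 0) at_top"
    unfolding filterlim_at using eva ha0 by (auto elim: eventually_mono)
  obtain L where L: "(Fz \<longlongrightarrow> L) (at_right 0)" using Fz_lim by blast
  have FaL: "((\<lambda>x. Fz (a x)) \<longlongrightarrow> L) at_top" by (rule filterlim_compose[OF L haF])
  have FbL: "((\<lambda>x. Fz (b x)) \<longlongrightarrow> L) at_top" by (rule filterlim_compose[OF L hbF])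
  have L1: "((\<lambda>x. ln (b x / ln (1 + b x)) / b x) \<longlongrightarrow> 1/2) at_top"
    by (rule filterlim_compose[OF R1 hbF])
  have L2: "((\<lambda>x. (b x - ln (1 + b x)) / b x) \<longlongrightarrow> 0) at_top"
    by (rule filterlim_compose[OF R2 hbF])
  define T1 where "T1 = (\<lambda>x. P x * (ln (b x / ln (1 + b x)) / b x))"
  define T2 where "T2 = (\<lambda>x. 2 powr x * (ln (1 + a x * Fz (a x)) - ln (1 + b x * Fz (b x))))"
  have hT1: "(T1 \<longlongrightarrow> 1 * (1/2)) at_top" unfolding T1_def by (intro tendsto_mult hP L1)
  have hT2: "(T2 \<longlongrightarrow> 0) at_top"
  proof (rule Lim_null_comparison)
    have "((\<lambda>x. P x * ((b x - ln (1 + b x)) / b x) * B + P x * \<bar>Fz (a x) - Fz (b x)\<bar>) \<longlongrightarrow>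
            1 * 0 * B + 1 * \<bar>L - L\<bar>) at_top"
      by (intro tendsto_intros hP L2 FaL FbL)
    then show "((\<lambda>x. P x * ((b x - ln (1 + b x)) / b x) * B + P x * \<bar>Fz (a x) - Fz (b x)\<bar>) \<longlongrightarrow> 0) at_top"
      by simp
    show "\<forall>\<^sub>F x in at_top. norm (T2 x) \<le> P x * ((b x - ln (1 + b x)) / b x) * B + P x * \<bar>Fz (a x) - Fz (b x)\<bar>"
      using evb evb1 eva
    proof eventually_elim
      case (elim x)
      have ab: "a x \<le> b x" unfolding a_def using elim by (intro ln_add_one_self_le_self) auto
      have a1: "a x \<le> 1" using ab elim by simp
      note Fa = Fz_bounds[OF elim(3) a1]
      note Fb = Fz_bounds[OF elim(1)] 
      have "\<bar>T2 x\<bar> \<le> 2 powr x * (b x - a x) * B + 2 powr x * b x * \<bar>Fz (a x) - Fz (b x)\<bar>"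
        unfolding T2_def using elim ab Fa Fb by (intro T2_bound) (auto simp: B_def)
      also have "2 powr x * (b x - a x) = P x * ((b x - ln (1 + b x)) / b x)"
        using elim by (simp add: P_def a_def)
      also have "2 powr x * b x = P x" by (simp add: P_def)
      finally show ?case by simp
    qed
  qed
  have "((\<lambda>x. T1 x + T2 x) \<longlongrightarrow> 1 * (1/2) + 0) at_top" by (intro tendsto_add hT1 hT2)
  then have lim: "((\<lambda>x. T1 x + T2 x) \<longlongrightarrow> 1/2) at_top" by simp
  show ?thesis
  proof (rule Lim_transform_eventually[OF lim])
    show "\<forall>\<^sub>F x in at_top. T1 x + T2 x =
        2 powr x * (ln (rzeta (ln (rzeta x) + 1)) - ln (rzeta (rzeta x)))"
      using evb evb1 eva
    proof eventually_elim
      case (elim x)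
      have ab: "a x \<le> b x" unfolding a_def using elim by (intro ln_add_one_self_le_self) auto
      have a1: "a x \<le> 1" using ab elim by simp
      have e1: "ln (rzeta x) + 1 = 1 + a x" by (simp add: a_def b_def)
      have e2: "rzeta x = 1 + b x" by (simp add: b_def)
      have "ln (rzeta (ln (rzeta x) + 1)) - ln (rzeta (rzeta x))
          = (ln (1 + a x * Fz (a x)) - ln (a x)) - (ln (1 + b x * Fz (b x)) - ln (b x))"
        unfolding e1 using ln_rzeta_split[OF elim(3) a1] ln_rzeta_split[of "b x"] elim
        by (simp add: e2[symmetric])
      moreover have "ln (b x) - ln (a x) = ln (b x / ln (1 + b x))"
        using elim by (simp add: ln_div a_def)
      ultimately have eq: "ln (rzeta (ln (rzeta x) + 1)) - ln (rzeta (rzeta x))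
          = ln (b x / ln (1 + b x)) + (ln (1 + a x * Fz (a x)) - ln (1 + b x * Fz (b x)))"
        by linarith
      have T1x: "T1 x = 2 powr x * ln (b x / ln (1 + b x))"
        using elim by (simp add: T1_def P_def)
      show ?case unfolding eq T1x T2_def distrib_left by (rule refl)
    qed
  qed
qed


end
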